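(* Consider the model $Y=X+Z_1$, $X=\Theta+Z_2$ with flat prior on $\Theta$, where $Z_2\sim N(0,\sigma^2)$ for some $\sigma>0$ and $Z_1$ is standard Cauchy, represented via a latent variable $Q\sim\mathrm{Ga}(1/2,1/2)$ (shape $1/2$, rate $1/2$) independent of $\Theta$ and $Z_2$, with $Z_1\mid Q\sim N(0,1/Q)$. Fix an observed $y$. The grouped Gibbs sampler iterates: given the current $X_{n-1}$, draw $(\Theta_n,Q_n)$ from $\mathcal L(\Theta,Q\mid Y=y,X=X_{n-1})$ (under which $\Theta$ and $Q$ are conditionally independent), then draw $X_n$ from $\mathcal L(X\mid Y=y,\Theta=\Theta_n,Q=Q_n)$. This grouped Gibbs sampler is not geometrically ergodic.
   Context: A Markov chain with stationary distribution $\mu$ is geometrically ergodic if there exist $r<1$ and a function $M$ such that the total variation distance between the law of the chain after $n$ steps started from $w$ and $\mu$ is at most $M(w)r^n$ for all $n$. *)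

theory Defs
  imports "HOL-Probability.Probability"
begin

text \<open>The full conditionals used by the grouped Gibbs sampler are:
    Theta | Y=y, X=x      ~ N(x, sigma^2)
    Q     | Y=y, X=x      ~ Ga(1, (1+(y-x)^2)/2)  (exponential, rate (1+(y-x)^2)/2),
    (Theta and Q conditionally independent)
    X | Y=y, Theta=t, Q=q ~ N((t/sigma^2 + q*y)/(1/sigma^2+q), 1/(1/sigma^2+q)).\<close>

definition normal_measure :: "real \<Rightarrow> real \<Rightarrow> real measure" where
  "normal_measure m s = density lborel (\<lambda>x. ennreal (normal_density m s x))"

definition exponential_measure :: "real \<Rightarrow> real measure" where
  "exponential_measure l = density lborel (\<lambda>x. ennreal (exponential_density l x))"

definition theta_cond :: "real \<Rightarrow> real \<Rightarrow> real measure" where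
  "theta_cond \<sigma> x = normal_measure x \<sigma>"

definition Q_cond :: "real \<Rightarrow> real \<Rightarrow> real measure" where
  "Q_cond y x = exponential_measure ((1 + (y - x)\<^sup>2) / 2)"

definition X_cond :: "real \<Rightarrow> real \<Rightarrow> real \<Rightarrow> real \<Rightarrow> real measure" where
  "X_cond \<sigma> y t q =
     normal_measure ((t / \<sigma>\<^sup>2 + q * y) / (1 / \<sigma>\<^sup>2 + q)) (1 / sqrt (1 / \<sigma>\<^sup>2 + q))"

definition gibbs_kernel :: "real \<Rightarrow> real \<Rightarrow> real \<Rightarrow> real measure" where
  "gibbs_kernel \<sigma> y x =
     (theta_cond \<sigma> x \<Otimes>\<^sub>M Q_cond y x) \<bind> (\<lambda>(t, q). X_cond \<sigma> y t q)"

fun gibbs_iter :: "real \<Rightarrow> real \<Rightarrow> nat \<Rightarrow> real \<Rightarrow> real measure" where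
  "gibbs_iter \<sigma> y 0 x = return borel x"
| "gibbs_iter \<sigma> y (Suc n) x = gibbs_iter \<sigma> y n x \<bind> gibbs_kernel \<sigma> y"

text \<open>Stationary law: posterior of X given Y = y (flat marginal of X times Cauchy likelihood),
  i.e. the Cauchy law centred at y.\<close>
definition X_posterior :: "real \<Rightarrow> real measure" where
  "X_posterior y = density lborel (\<lambda>x. ennreal (1 / (pi * (1 + (x - y)\<^sup>2))))"

definition tv_dist :: "real measure \<Rightarrow> real measure \<Rightarrow> real" where
  "tv_dist M N = (SUP A \<in> sets borel. \<bar>measure M A - measure N A\<bar>)"

definition geometrically_ergodic ::
  "(nat \<Rightarrow> real \<Rightarrow> real measure) \<Rightarrow> real measure \<Rightarrow> bool" where
  "geometrically_ergodic P \<mu> \<longleftrightarrow>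
     (\<exists>r < 1. \<exists>M :: real \<Rightarrow> real. \<forall>w n. tv_dist (P n w) \<mu> \<le> M w * r ^ n)"

end

theory Submission imports Defs begin

lemma density_kernel:
  fixes f :: "'a \<Rightarrow> real \<Rightarrow> real"
  assumes f[measurable]: "(\<lambda>p. f (fst p) (snd p)) \<in> borel_measurable (M \<Otimes>\<^sub>M borel)"
  and sub: "\<And>a. a \<in> space M \<Longrightarrow> subprob_space (density lborel (\<lambda>x. ennreal (f a x)))"
  shows "(\<lambda>a. density lborel (\<lambda>x. ennreal (f a x))) \<in> M \<rightarrow>\<^sub>M subprob_algebra borel"
proof (rule measurable_subprob_algebra)
  show "\<And>a. a \<in> space M \<Longrightarrow> subprob_space (density lborel (\<lambda>x. ennreal (f a x)))" by (rule sub)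
  show "\<And>a. a \<in> space M \<Longrightarrow> sets (density lborel (\<lambda>x. ennreal (f a x))) = sets borel" by simp
  fix A :: "real set" assume A[measurable]: "A \<in> sets borel"
  have f2: "(\<lambda>p. ennreal (f (fst p) (snd p)) * indicator A (snd p)) \<in> borel_measurable (M \<Otimes>\<^sub>M lborel)"
    by (subst measurable_cong_sets[OF sets_pair_measure_cong[OF refl sets_lborel] refl]) measurable
  have "(\<lambda>a. \<integral>\<^sup>+ x. ennreal (f a x) * indicator A x \<partial>lborel) \<in> borel_measurable M"
    using lborel.borel_measurable_nn_integral[of "\<lambda>a x. ennreal (f a x) * indicator A x" M] f2
    by (simp add: case_prod_beta')
  then show "(\<lambda>a. emeasure (density lborel (\<lambda>x. ennreal (f a x))) A) \<in> borel_measurable M"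
  proof (rule measurable_cong[THEN iffD1, rotated])
    fix a assume a: "a \<in> space M"
    have "(\<lambda>x. ennreal (f a x)) \<in> borel_measurable borel"
      using measurable_Pair2[OF f a] by simp
    then show "(\<integral>\<^sup>+ x. ennreal (f a x) * indicator A x \<partial>lborel) = emeasure (density lborel (\<lambda>x. ennreal (f a x))) A"
      using A by (subst emeasure_density) auto
  qed
qed

lemma subprob_normal: "subprob_space (normal_measure m s)"
proof (cases "s = 0")
  case True
  then have "normal_measure m s = density lborel (\<lambda>_. 0)"
    by (simp add: normal_measure_def normal_density_def)
  then show ?thesis
    by (intro subprob_spaceI) (simp_all add: emeasure_density)
next
  case False
  then have "normal_density m s = normal_density m \<bar>s\<bar>"
    by (simp add: fun_eq_iff normal_density_def)
  then have "normal_measure m s = density lborel (normal_density m \<bar>s\<bar>)"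
    by (simp add: normal_measure_def)
  moreover have "prob_space (density lborel (normal_density m \<bar>s\<bar>))"
    using False by (intro prob_space_normal_density) simp
  ultimately show ?thesis by (simp add: prob_space_imp_subprob_space)
qed

lemma subprob_exp: "l > 0 \<Longrightarrow> subprob_space (exponential_measure l)"
  unfolding exponential_measure_def
  by (rule prob_space_imp_subprob_space, rule prob_space_exponential_density)

lemma theta_kernel: "theta_cond \<sigma> \<in> borel \<rightarrow>\<^sub>M subprob_algebra borel"
  unfolding theta_cond_def[abs_def] normal_measure_def
  apply (rule density_kernel)
   apply (unfold normal_density_def)[1]
   apply measurable
  apply (rule subprob_normal[unfolded normal_measure_def])
  done


lemma Q_kernel: "Q_cond y \<in> borel \<rightarrow>\<^sub>M subprob_algebra borel"
  unfolding Q_cond_def[abs_def] exponential_measure_def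
  apply (rule density_kernel)
   apply (unfold exponential_density_def, measurable)[1]
  apply (rule subprob_exp[unfolded exponential_measure_def])
  apply (simp add: add_pos_nonneg)
  done

lemma X_kernel: "(\<lambda>p. X_cond \<sigma> y (fst p) (snd p)) \<in> borel \<Otimes>\<^sub>M borel \<rightarrow>\<^sub>M subprob_algebra borel"
  unfolding X_cond_def normal_measure_def
  apply (rule density_kernel)
   apply (unfold normal_density_def)[1]
   apply measurable
  apply (rule subprob_normal[unfolded normal_measure_def])
  done


lemma gibbs_kernel_meas: "gibbs_kernel \<sigma> y \<in> borel \<rightarrow>\<^sub>M subprob_algebra borel"
proof -
  have A: "(\<lambda>x. theta_cond \<sigma> x \<Otimes>\<^sub>M Q_cond y x) \<in> borel \<rightarrow>\<^sub>M subprob_algebra (borel \<Otimes>\<^sub>M borel)"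
    by (intro measurable_pair_measure theta_kernel Q_kernel)
  have eq: "gibbs_kernel \<sigma> y = (\<lambda>x. (theta_cond \<sigma> x \<Otimes>\<^sub>M Q_cond y x) \<bind> (\<lambda>p. X_cond \<sigma> y (fst p) (snd p)))"
    by (simp add: gibbs_kernel_def fun_eq_iff case_prod_beta')
  show ?thesis
    unfolding eq by (rule measurable_bind2[OF A X_kernel])
qed

lemma iter_props: "subprob_space (gibbs_iter \<sigma> y n w) \<and> sets (gibbs_iter \<sigma> y n w) = sets borel"
proof (induction n)
  case 0
  then show ?case by (simp add: prob_space_imp_subprob_space prob_space_return)
next
  case (Suc n)
  let ?P = "gibbs_iter \<sigma> y n w"
  have K: "gibbs_kernel \<sigma> y \<in> ?P \<rightarrow>\<^sub>M subprob_algebra borel"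
    using gibbs_kernel_meas measurable_cong_sets[OF conjunct2[OF Suc.IH] refl] by blast
  have ne: "space ?P \<noteq> {}" using Suc.IH subprob_space.subprob_not_empty by blast
  have 1: "subprob_space (?P \<bind> gibbs_kernel \<sigma> y)"
    using subprob_space_bind[OF _ K] Suc.IH by blast
  have 2: "sets (?P \<bind> gibbs_kernel \<sigma> y) = sets borel"
    by (rule sets_bind[OF sets_kernel[OF K] ne])
  show ?case using 1 2 by simp
qed

lemma normal_moment2:
  fixes m s c :: real assumes s: "s > 0"
  shows "(\<integral>\<^sup>+ z. ennreal ((z - c)\<^sup>2) \<partial>normal_measure m s) = ennreal ((m - c)\<^sup>2 + s\<^sup>2)"
proof -
  have h1: "has_bochner_integral lborel (\<lambda>x. normal_density m s x * (x - m)^(2*1)) (s\<^sup>2)"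
    using normal_moment_even[OF s, where k=1 and \<mu>=m] by (simp add: field_simps power2_eq_square)
  have h2: "has_bochner_integral lborel (\<lambda>x. normal_density m s x * (x - m)^(2*0+1)) 0"
    using normal_moment_odd[OF s, where k=0 and \<mu>=m] by simp
  have h3: "has_bochner_integral lborel (\<lambda>x. normal_density m s x) 1"
    using normal_moment_even[OF s, where k=0 and \<mu>=m] by simp
  have "has_bochner_integral lborel (\<lambda>x. normal_density m s x * (x - m)^(2*1) + (2*(m-c)) * (normal_density m s x * (x - m)^(2*0+1)) + (m-c)\<^sup>2 * normal_density m s x) (s\<^sup>2 + (2*(m-c))*0 + (m-c)\<^sup>2*1)"
    by (intro has_bochner_integral_add has_bochner_integral_mult_right h1 h2 h3)
  moreover have "(\<lambda>x. normal_density m s x * (x - m)^(2*1) + (2*(m-c)) * (normal_density m s x * (x - m)^(2*0+1)) + (m-c)\<^sup>2 * normal_density m s x) = (\<lambda>x. normal_density m s x * (x - c)\<^sup>2)"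
    by (auto simp: fun_eq_iff algebra_simps power2_eq_square)
  ultimately have H: "has_bochner_integral lborel (\<lambda>x. normal_density m s x * (x - c)\<^sup>2) ((m - c)\<^sup>2 + s\<^sup>2)"
    by (simp add: add.commute)
  have "(\<integral>\<^sup>+ z. ennreal ((z - c)\<^sup>2) \<partial>normal_measure m s) = (\<integral>\<^sup>+ z. ennreal (normal_density m s z * (z - c)\<^sup>2) \<partial>lborel)"
    unfolding normal_measure_def
    by (subst nn_integral_density) (auto simp: ennreal_mult)
  also have "\<dots> = ennreal ((m - c)\<^sup>2 + s\<^sup>2)"
    using H by (subst nn_integral_eq_integral) (auto simp: has_bochner_integral_iff)
  finally show ?thesis .
qed


lemma real_step_ineq:
  fixes \<sigma> t q y :: real
  assumes s: "\<sigma> > 0" and q: "q \<ge> 0"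
  shows "((t / \<sigma>\<^sup>2 + q * y) / (1 / \<sigma>\<^sup>2 + q) - y)\<^sup>2 + (1 / sqrt (1 / \<sigma>\<^sup>2 + q))\<^sup>2 \<le> (t - y)\<^sup>2 + \<sigma>\<^sup>2"
proof -
  define a where "a = 1 / \<sigma>\<^sup>2"
  have a: "a > 0" using s by (simp add: a_def)
  define d where "d = a + q"
  have d: "d \<ge> a" "d > 0" using a q by (auto simp: d_def)
  have e0: "(t / \<sigma>\<^sup>2 + q * y) / (1 / \<sigma>\<^sup>2 + q) = (a * t + q * y) / d"
    by (simp add: a_def d_def)
  have e1: "(t / \<sigma>\<^sup>2 + q * y) / (1 / \<sigma>\<^sup>2 + q) - y = (a / d) * (t - y)"
    unfolding e0 using d by (simp add: field_simps d_def)
  have r: "0 \<le> a / d" "a / d \<le> 1" using a d by auto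
  have "((a / d) * (t - y))\<^sup>2 = (a/d)\<^sup>2 * (t - y)\<^sup>2" by (simp only: power_mult_distrib)
  also have "\<dots> \<le> 1 * (t - y)\<^sup>2"
    using r by (intro mult_right_mono) (auto simp: power_le_one)
  finally have i1: "((a / d) * (t - y))\<^sup>2 \<le> (t - y)\<^sup>2" by simp
  have "(1 / sqrt (1 / \<sigma>\<^sup>2 + q))\<^sup>2 = 1 / d"
    using d by (simp add: a_def[symmetric] d_def[symmetric] power_divide)
  also have "\<dots> \<le> 1 / a" using a d by (simp add: frac_le)
  also have "\<dots> = \<sigma>\<^sup>2" by (simp add: a_def)
  finally have i2: "(1 / sqrt (1 / \<sigma>\<^sup>2 + q))\<^sup>2 \<le> \<sigma>\<^sup>2" .
  show ?thesis using i1 i2 e1 by simp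
qed

lemma sets_theta[simp]: "sets (theta_cond \<sigma> x) = sets borel"
  by (simp add: theta_cond_def normal_measure_def)
lemma sets_Q[simp]: "sets (Q_cond y x) = sets borel"
  by (simp add: Q_cond_def exponential_measure_def)

lemma kernel_moment:
  assumes s: "\<sigma> > 0"
  shows "(\<integral>\<^sup>+ z. ennreal ((z - y)\<^sup>2) \<partial>gibbs_kernel \<sigma> y x) \<le> ennreal ((x - y)\<^sup>2 + 2 * \<sigma>\<^sup>2)"
proof -
  let ?T = "theta_cond \<sigma> x" and ?Q = "Q_cond y x"
  define G where "G t q = (\<integral>\<^sup>+ z. ennreal ((z - y)\<^sup>2) \<partial>X_cond \<sigma> y t q)" for t q
  have setsTQ: "sets (?T \<Otimes>\<^sub>M ?Q) = sets (borel \<Otimes>\<^sub>M borel)"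
    by (intro sets_pair_measure_cong) simp_all
  have XK: "(\<lambda>p. X_cond \<sigma> y (fst p) (snd p)) \<in> ?T \<Otimes>\<^sub>M ?Q \<rightarrow>\<^sub>M subprob_algebra borel"
    using X_kernel measurable_cong_sets[OF setsTQ refl] by blast
  have Gm: "(\<lambda>p. G (fst p) (snd p)) \<in> borel_measurable (?T \<Otimes>\<^sub>M ?Q)"
    unfolding G_def
    by (rule measurable_compose[OF XK nn_integral_measurable_subprob_algebra]) simp
  have subQ: "subprob_space ?Q"
    unfolding Q_cond_def by (rule subprob_exp) (simp add: add_pos_nonneg)
  then interpret Q: subprob_space ?Q .
  have subT: "subprob_space ?T"
    unfolding theta_cond_def by (rule subprob_normal)
  then interpret T: subprob_space ?T .
  have "(\<integral>\<^sup>+ z. ennreal ((z - y)\<^sup>2) \<partial>gibbs_kernel \<sigma> y x)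
      = (\<integral>\<^sup>+ p. G (fst p) (snd p) \<partial>(?T \<Otimes>\<^sub>M ?Q))"
  proof -
    have eq: "gibbs_kernel \<sigma> y x = (?T \<Otimes>\<^sub>M ?Q) \<bind> (\<lambda>p. X_cond \<sigma> y (fst p) (snd p))"
      by (simp add: gibbs_kernel_def case_prod_beta')
    show ?thesis unfolding eq G_def
      by (rule nn_integral_bind[OF _ XK]) simp
  qed
  also have "\<dots> = (\<integral>\<^sup>+ t. \<integral>\<^sup>+ q. G t q \<partial>?Q \<partial>?T)"
    using Q.nn_integral_fst[OF Gm] by simp
  also have "\<dots> \<le> (\<integral>\<^sup>+ t. ennreal ((t - y)\<^sup>2) + ennreal (\<sigma>\<^sup>2) \<partial>?T)"
  proof (rule nn_integral_mono)
    fix t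
    have AEq: "AE q in ?Q. q \<ge> 0"
      unfolding Q_cond_def exponential_measure_def
      by (subst AE_density) (auto simp: exponential_density_def)
    have "(\<integral>\<^sup>+ q. G t q \<partial>?Q) \<le> (\<integral>\<^sup>+ q. ennreal ((t - y)\<^sup>2 + \<sigma>\<^sup>2) \<partial>?Q)"
    proof (rule nn_integral_mono_AE)
      show "AE q in ?Q. G t q \<le> ennreal ((t - y)\<^sup>2 + \<sigma>\<^sup>2)"
        using AEq
      proof eventually_elim
        case (elim q)
        have pos: "1 / sqrt (1 / \<sigma>\<^sup>2 + q) > 0" using s elim by (simp add: add_pos_nonneg)
        have "G t q = ennreal (((t / \<sigma>\<^sup>2 + q * y) / (1 / \<sigma>\<^sup>2 + q) - y)\<^sup>2 + (1 / sqrt (1 / \<sigma>\<^sup>2 + q))\<^sup>2)"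
          unfolding G_def X_cond_def by (rule normal_moment2[OF pos])
        also have "\<dots> \<le> ennreal ((t - y)\<^sup>2 + \<sigma>\<^sup>2)"
          by (rule ennreal_leI, rule real_step_ineq[OF s elim])
        finally show ?case .
      qed
    qed
    also have "\<dots> \<le> ennreal ((t - y)\<^sup>2 + \<sigma>\<^sup>2)"
      using Q.emeasure_space_le_1 by (simp add: mult_left_le)
    finally show "(\<integral>\<^sup>+ q. G t q \<partial>?Q) \<le> ennreal ((t - y)\<^sup>2) + ennreal (\<sigma>\<^sup>2)"
      by (simp add: ennreal_plus)
  qed
  also have "\<dots> = (\<integral>\<^sup>+ t. ennreal ((t - y)\<^sup>2) \<partial>?T) + (\<integral>\<^sup>+ t. ennreal (\<sigma>\<^sup>2) \<partial>?T)"
    by (rule nn_integral_add) (simp_all add: measurable_cong_sets[OF sets_theta refl])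
  also have "\<dots> \<le> ennreal ((x - y)\<^sup>2 + \<sigma>\<^sup>2) + ennreal (\<sigma>\<^sup>2)"
  proof (rule add_mono)
    show "(\<integral>\<^sup>+ t. ennreal ((t - y)\<^sup>2) \<partial>?T) \<le> ennreal ((x - y)\<^sup>2 + \<sigma>\<^sup>2)"
      unfolding theta_cond_def using normal_moment2[OF s] by simp
    show "(\<integral>\<^sup>+ t. ennreal (\<sigma>\<^sup>2) \<partial>?T) \<le> ennreal (\<sigma>\<^sup>2)"
      using T.emeasure_space_le_1 by (simp add: mult_left_le)
  qed
  also have "\<dots> = ennreal ((x - y)\<^sup>2 + 2 * \<sigma>\<^sup>2)"
    by (simp add: ennreal_plus[symmetric] del: ennreal_plus)
  finally show ?thesis .
qed



lemma iter_moment: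
  assumes s: "\<sigma> > 0"
  shows "(\<integral>\<^sup>+ z. ennreal ((z - y)\<^sup>2) \<partial>gibbs_iter \<sigma> y n w) \<le> ennreal ((w - y)\<^sup>2 + 2 * real n * \<sigma>\<^sup>2)"
proof (induction n)
  case 0
  then show ?case by (simp add: nn_integral_return)
next
  case (Suc n)
  let ?P = "gibbs_iter \<sigma> y n w"
  have IH2: "subprob_space ?P" "sets ?P = sets borel" using iter_props by blast+
  interpret P: subprob_space ?P by (rule IH2(1))
  have K: "gibbs_kernel \<sigma> y \<in> ?P \<rightarrow>\<^sub>M subprob_algebra borel"
    using gibbs_kernel_meas measurable_cong_sets[OF IH2(2) refl] by blast
  have "(\<integral>\<^sup>+ z. ennreal ((z - y)\<^sup>2) \<partial>gibbs_iter \<sigma> y (Suc n) w)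
      = (\<integral>\<^sup>+ x. \<integral>\<^sup>+ z. ennreal ((z - y)\<^sup>2) \<partial>gibbs_kernel \<sigma> y x \<partial>?P)"
    by (simp only: gibbs_iter.simps) (rule nn_integral_bind[OF _ K], simp)
  also have "\<dots> \<le> (\<integral>\<^sup>+ x. ennreal ((x - y)\<^sup>2) + ennreal (2 * \<sigma>\<^sup>2) \<partial>?P)"
    by (rule nn_integral_mono) (simp add: kernel_moment[OF s] ennreal_plus[symmetric] del: ennreal_plus)
  also have "\<dots> = (\<integral>\<^sup>+ x. ennreal ((x - y)\<^sup>2) \<partial>?P) + (\<integral>\<^sup>+ x. ennreal (2 * \<sigma>\<^sup>2) \<partial>?P)"
    by (rule nn_integral_add) (simp_all add: measurable_cong_sets[OF IH2(2) refl])
  also have "\<dots> \<le> ennreal ((w - y)\<^sup>2 + 2 * real n * \<sigma>\<^sup>2) + ennreal (2 * \<sigma>\<^sup>2)"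
    using Suc.IH P.emeasure_space_le_1 by (intro add_mono) (auto simp: mult_left_le)
  also have "\<dots> = ennreal ((w - y)\<^sup>2 + 2 * real (Suc n) * \<sigma>\<^sup>2)"
    by (simp add: ennreal_plus[symmetric] algebra_simps del: ennreal_plus)
  finally show ?case .
qed

lemma iter_cheb:
  assumes s: "\<sigma> > 0" and R: "R > 0"
  shows "measure (gibbs_iter \<sigma> y n w) {z. R < \<bar>z - y\<bar>} * R\<^sup>2 \<le> (w - y)\<^sup>2 + 2 * real n * \<sigma>\<^sup>2"
proof -
  let ?P = "gibbs_iter \<sigma> y n w" and ?A = "{z. R < \<bar>z - y\<bar>}"
  have IH2: "subprob_space ?P" "sets ?P = sets borel" using iter_props by blast+
  interpret P: subprob_space ?P by (rule IH2(1))
  have A: "?A \<in> sets ?P" using IH2(2) by simp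
  have "ennreal (measure ?P ?A * R\<^sup>2) = emeasure ?P ?A * ennreal (R\<^sup>2)"
    by (simp add: P.emeasure_eq_measure ennreal_mult)
  also have "\<dots> = (\<integral>\<^sup>+ z. indicator ?A z * ennreal (R\<^sup>2) \<partial>?P)"
    using A by (simp add: nn_integral_multc)
  also have "\<dots> \<le> (\<integral>\<^sup>+ z. ennreal ((z - y)\<^sup>2) \<partial>?P)"
  proof (rule nn_integral_mono)
    fix z
    show "indicator ?A z * ennreal (R\<^sup>2) \<le> ennreal ((z - y)\<^sup>2)"
    proof (cases "z \<in> ?A")
      case True
      then have "\<bar>R\<bar> \<le> \<bar>z - y\<bar>" using R by simp
      then have "R\<^sup>2 \<le> (z - y)\<^sup>2"
        by (simp add: abs_le_square_iff)
      then show ?thesis using True by (simp add: ennreal_leI)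
    qed simp
  qed
  also have "\<dots> \<le> ennreal ((w - y)\<^sup>2 + 2 * real n * \<sigma>\<^sup>2)"
    by (rule iter_moment[OF s])
  finally show ?thesis
    by (subst (asm) ennreal_le_iff) (auto simp: add_nonneg_nonneg)
qed

lemma post_finite: "finite_measure (X_posterior y)"
proof
  have I: "integrable lborel (\<lambda>x. inverse (1 + x\<^sup>2) :: real)"
    using integrable_inverse_1_plus_square by (simp add: set_integrable_def)
  have "(\<integral>\<^sup>+ x. ennreal (norm (inverse (1 + x\<^sup>2) :: real)) \<partial>lborel) < \<infinity>"
    using integrableD(2)[OF I] by (simp add: top.not_eq_extremum)
  then have F: "(\<integral>\<^sup>+ x. ennreal (inverse (1 + x\<^sup>2)) \<partial>lborel) < \<infinity>"
    by (simp add: add_pos_nonneg)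
  have "(\<integral>\<^sup>+ x. ennreal (1 / (pi * (1 + (x - y)\<^sup>2))) \<partial>lborel)
      = ennreal \<bar>1::real\<bar> * (\<integral>\<^sup>+ x. ennreal (1 / (pi * (1 + ((y + 1 * x) - y)\<^sup>2))) \<partial>lborel)"
    by (rule nn_integral_real_affine[where c=1 and t=y]) auto
  also have "\<dots> = (\<integral>\<^sup>+ x. ennreal (1 / pi) * ennreal (inverse (1 + x\<^sup>2)) \<partial>lborel)"
  proof -
    have "\<And>x. ennreal (1 / (pi * (1 + x\<^sup>2))) = ennreal (1 / pi) * ennreal (inverse (1 + x\<^sup>2))"
      by (subst ennreal_mult[symmetric]) (auto simp: field_simps add_pos_nonneg)
    then show ?thesis by simp
  qed
  also have "\<dots> = ennreal (1 / pi) * (\<integral>\<^sup>+ x. ennreal (inverse (1 + x\<^sup>2)) \<partial>lborel)"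
    by (rule nn_integral_cmult) simp
  also have "\<dots> < \<infinity>" using F by (simp add: ennreal_mult_less_top)
  finally show "emeasure (X_posterior y) (space (X_posterior y)) \<noteq> \<infinity>"
    unfolding X_posterior_def by (simp add: emeasure_density)
qed

lemma post_lower:
  assumes R: "R \<ge> 1"
  shows "1 / (5 * pi * R) \<le> measure (X_posterior y) {z. R < \<bar>z - y\<bar>}"
proof -
  interpret F: finite_measure "X_posterior y" by (rule post_finite)
  let ?I = "{y + R <..< y + 2 * R}"
  define c where "c = 1 / (pi * (1 + 4 * R\<^sup>2))"
  have "ennreal (c * R) = (\<integral>\<^sup>+ x. ennreal c * indicator ?I x \<partial>lborel)"
    using R by (simp add: nn_integral_cmult ennreal_mult[symmetric] c_def)
  also have "\<dots> \<le> (\<integral>\<^sup>+ x. ennreal (1 / (pi * (1 + (x - y)\<^sup>2))) * indicator ?I x \<partial>lborel)"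
  proof (rule nn_integral_mono)
    fix x
    show "ennreal c * indicator ?I x \<le> ennreal (1 / (pi * (1 + (x - y)\<^sup>2))) * indicator ?I x"
    proof (cases "x \<in> ?I")
      case True
      then have "0 < x - y" "x - y < 2 * R" using R by auto
      then have "(x - y)\<^sup>2 \<le> (2 * R)\<^sup>2" by (intro power_mono) auto
      then have "pi * (1 + (x - y)\<^sup>2) \<le> pi * (1 + 4 * R\<^sup>2)" by (simp add: power_mult_distrib)
      then have "c \<le> 1 / (pi * (1 + (x - y)\<^sup>2))"
        unfolding c_def by (intro divide_left_mono) (auto intro!: mult_pos_pos add_pos_nonneg)
      then show ?thesis using True by (simp add: ennreal_leI)
    qed simp
  qed
  also have "\<dots> = emeasure (X_posterior y) ?I"
    unfolding X_posterior_def by (simp add: emeasure_density)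
  also have "\<dots> \<le> emeasure (X_posterior y) {z. R < \<bar>z - y\<bar>}"
    using R by (intro emeasure_mono) (auto simp: X_posterior_def)
  also have "\<dots> = ennreal (measure (X_posterior y) {z. R < \<bar>z - y\<bar>})"
    by (rule F.emeasure_eq_measure)
  finally have 1: "c * R \<le> measure (X_posterior y) {z. R < \<bar>z - y\<bar>}"
    by (subst (asm) ennreal_le_iff) auto
  have "1 / (5 * pi * R) \<le> c * R"
  proof -
    have "1 \<le> R * R" using mult_mono[of 1 R 1 R] R by simp
    then have "1 + 4 * R\<^sup>2 \<le> 5 * R\<^sup>2" by (simp add: power2_eq_square)
    then have "pi * (1 + 4 * R\<^sup>2) \<le> pi * (5 * R\<^sup>2)" by simp
    then have "1 / (pi * (5 * R\<^sup>2)) \<le> c"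
      unfolding c_def by (intro divide_left_mono) (auto intro!: mult_pos_pos add_pos_nonneg)
    then have "R * (1 / (pi * (5 * R\<^sup>2))) \<le> R * c" using R by (intro mult_left_mono) auto
    then show ?thesis using R by (simp add: power2_eq_square field_simps)
  qed
  with 1 show ?thesis by linarith
qed

lemma tv_lower:
  assumes "A \<in> sets borel"
  shows "measure (X_posterior y) A - measure (gibbs_iter \<sigma> y n w) A \<le> tv_dist (gibbs_iter \<sigma> y n w) (X_posterior y)"
proof -
  interpret F: finite_measure "X_posterior y" by (rule post_finite)
  interpret P: subprob_space "gibbs_iter \<sigma> y n w" using iter_props by blast
  have bdd: "bdd_above ((\<lambda>A. \<bar>measure (gibbs_iter \<sigma> y n w) A - measure (X_posterior y) A\<bar>) ` sets borel)"
  proof (rule bdd_aboveI2)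
    fix A
    have "measure (gibbs_iter \<sigma> y n w) A \<le> 1" by (rule P.subprob_measure_le_1)
    moreover have "measure (X_posterior y) A \<le> measure (X_posterior y) (space (X_posterior y))"
      by (rule F.bounded_measure)
    ultimately show "\<bar>measure (gibbs_iter \<sigma> y n w) A - measure (X_posterior y) A\<bar> \<le> 1 + measure (X_posterior y) (space (X_posterior y))"
      by (simp add: abs_le_iff measure_nonneg) (smt (verit) measure_nonneg)
  qed
  have "measure (X_posterior y) A - measure (gibbs_iter \<sigma> y n w) A \<le> \<bar>measure (gibbs_iter \<sigma> y n w) A - measure (X_posterior y) A\<bar>"
    by simp
  also have "\<dots> \<le> tv_dist (gibbs_iter \<sigma> y n w) (X_posterior y)"
    unfolding tv_dist_def using bdd assms by (rule cSUP_upper2) simp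
  finally show ?thesis .
qed



theorem mainTheorem8:
  fixes \<sigma> y :: real
  assumes "\<sigma> > 0"
  shows "\<not> geometrically_ergodic (gibbs_iter \<sigma> y) (X_posterior y)"
proof
  assume "geometrically_ergodic (gibbs_iter \<sigma> y) (X_posterior y)"
  then obtain r M where r: "r < 1" and H: "\<And>w n. tv_dist (gibbs_iter \<sigma> y n w) (X_posterior y) \<le> M w * r ^ n"
    unfolding geometrically_ergodic_def by blast
  define c0 where "c0 = 20 * pi * \<sigma>\<^sup>2 + 1"
  have c0: "c0 \<ge> 1" "c0 \<ge> 20 * pi * \<sigma>\<^sup>2" using pi_gt_zero by (auto simp: c0_def)
  define K where "K = M y"
  define \<epsilon> where "\<epsilon> n = 1 / (10 * pi * c0 * (real n + 1))" for n
  have epos: "\<epsilon> n > 0" for n using c0 by (auto simp: \<epsilon>_def intro!: mult_pos_pos)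
  have low: "\<epsilon> n \<le> K * r ^ n" for n
  proof -
    define R where "R = c0 * (real n + 1)"
    have R1: "R \<ge> 1" using c0 mult_mono[of 1 c0 1 "real n + 1"] by (simp add: R_def)
    have Rpos: "R > 0" using R1 by simp
    let ?A = "{z. R < \<bar>z - y\<bar>}"
    have mu: "1 / (5 * pi * R) \<le> measure (X_posterior y) ?A" by (rule post_lower[OF R1])
    have ch: "measure (gibbs_iter \<sigma> y n y) ?A * R\<^sup>2 \<le> 2 * real n * \<sigma>\<^sup>2"
      using iter_cheb[OF assms Rpos, of y n y] by simp
    have "2 * real n * \<sigma>\<^sup>2 * (10 * pi) = 20 * pi * \<sigma>\<^sup>2 * real n" by simp
    also have "\<dots> \<le> c0 * real n" using c0 by (intro mult_right_mono) auto
    also have "\<dots> \<le> R" using c0 by (simp add: R_def algebra_simps)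
    finally have "2 * real n * \<sigma>\<^sup>2 * (10 * pi) \<le> R" .
    then have "measure (gibbs_iter \<sigma> y n y) ?A * R\<^sup>2 * (10 * pi) \<le> R"
      using mult_right_mono[OF ch, of "10 * pi"] pi_gt_zero by linarith
    then have PA: "measure (gibbs_iter \<sigma> y n y) ?A \<le> 1 / (10 * pi * R)"
      using Rpos pi_gt_zero by (simp add: field_simps power2_eq_square)
    have "measure (X_posterior y) ?A - measure (gibbs_iter \<sigma> y n y) ?A \<le> tv_dist (gibbs_iter \<sigma> y n y) (X_posterior y)"
      by (rule tv_lower) simp
    moreover have "1 / (5 * pi * R) - 1 / (10 * pi * R) = \<epsilon> n"
    proof -
      have "1 / (5 * pi * R) - 1 / (10 * pi * R) = 1 / (10 * pi * R)"
        using Rpos pi_gt_zero by (simp add: field_simps)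
      also have "\<dots> = \<epsilon> n" by (simp add: \<epsilon>_def R_def mult.assoc)
      finally show ?thesis .
    qed
    ultimately have "\<epsilon> n \<le> tv_dist (gibbs_iter \<sigma> y n y) (X_posterior y)"
      using mu PA by linarith
    then show ?thesis using H[where w=y and n=n] by (simp add: K_def)
  qed
  show False
  proof (cases "r > 0")
    case True
    have lim: "(\<lambda>n. 10 * pi * c0 * K * (real n * r ^ n + r ^ n)) \<longlonglongrightarrow> 10 * pi * c0 * K * (0 + 0)"
      using True r
      by (intro tendsto_intros powser_times_n_limit_0 LIMSEQ_power_zero) simp_all
    have "1 \<le> 10 * pi * c0 * K * (real n * r ^ n + r ^ n)" for n
    proof -
      have d: "10 * pi * c0 * (real n + 1) > 0" using c0 by (auto intro!: mult_pos_pos)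
      have "1 = (10 * pi * c0 * (real n + 1)) * \<epsilon> n" using d c0 by (simp add: \<epsilon>_def)
      also have "\<dots> \<le> (10 * pi * c0 * (real n + 1)) * (K * r ^ n)"
        using d low[of n] by (intro mult_left_mono) auto
      also have "\<dots> = 10 * pi * c0 * K * (real n * r ^ n + r ^ n)" by (simp add: algebra_simps)
      finally show ?thesis .
    qed
    then have "1 \<le> 10 * pi * c0 * K * (0 + 0)"
      by (intro LIMSEQ_le_const[OF lim]) auto
    then show False by simp
  next
    case False
    show False
    proof (cases "r = 0")
      case True
      then show False using low[of 1] epos[of 1] by simp
    next
      case False
      with \<open>\<not> r > 0\<close> have rn: "r < 0" by simp
      have "K * r > 0" using low[of 1] epos[of 1] by simp
      then have "K * r * r < 0" using rn by (simp add: mult_pos_neg)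
      moreover have "\<epsilon> 2 \<le> K * r * r" using low[of 2] by (simp add: power2_eq_square mult.assoc)
      ultimately show False using epos[of 2] by simp
    qed
  qed
qed


end
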